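(* Let $a, b$ be positive integers and let $T_{a,b} = \{C_{i,1} : 1 \le i \le 2a+1\} \cup \{C_{a+1,j} : 2 \le j \le b+1\}$, of size $n = 2a+b+1$. Then on the $n \times n$ board, $2 \le \mathrm{cp}_{\mathrm{free}}(T_{a,b}) \le 4$.
   Context: For integers $i,j$, $C_{i,j}$ denotes the unit square cell in column $i$ and row $j$ of the integer grid (columns numbered left to right, rows numbered top to bottom). A polyomino is a finite set of cells; its size is its number of cells. For a polyomino $\mathcal{P}$ of size $n$ the board is $\mathbb{B} = \{C_{i,j} : 1 \le i,j \le n\}$. The shift of $\mathcal{P}$ by integers $(c,d)$ is $\mathcal{P}+(c,d) = \{C_{x+c,y+d} : C_{x,y} \in \mathcal{P}\}$. The rotations of $T_{a,b}$ by $90^\circ,180^\circ,270^\circ$ clockwise are $TR_{a,b} = \{C_{b+1,i} : 1 \le i \le 2a+1\} \cup \{C_{j,a+1} : 1 \le j \le b\}$, $TR^2_{a,b} = \{C_{i,b+1} : 1 \le i \le 2a+1\} \cup \{C_{a+1,j} : 1 \le j \le b\}$, $TR^3_{a,b} = \{C_{1,i} : 1 \le i \le 2a+1\} \cup \{C_{j,a+1} : 2 \le j \le b+1\}$. A free copy of $T_{a,b}$ is any shift of one of these four. A set of polyominoes is a valid arrangement if each is contained in $\mathbb{B}$ and they are pairwise disjoint. A free packing of $\mathcal{P}$ is a set of free copies of $\mathcal{P}$ forming a valid arrangement such that adding any further free copy of $\mathcal{P}$ yields an invalid arrangement. The clumsy free packing number $\mathrm{cp}_{\mathrm{free}}(\mathcal{P})$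 is the minimum number of polyominoes in a free packing of $\mathcal{P}$ on the $n \times n$ board. *)

theory Defs
  imports Main
begin

text \<open>A cell C_{i,j} is represented by the pair (i, j) :: int \<times> int
  (i = column, j = row). A polyomino is a finite set of cells.\<close>

type_synonym cell = "int \<times> int"

definition shift :: "cell set \<Rightarrow> int \<Rightarrow> int \<Rightarrow> cell set" where
  "shift P c d = {(x + c, y + d) | x y. (x, y) \<in> P}"

definition board :: "nat \<Rightarrow> cell set" where
  "board n = {(i, j). 1 \<le> i \<and> i \<le> int n \<and> 1 \<le> j \<and> j \<le> int n}"

definition T :: "nat \<Rightarrow> nat \<Rightarrow> cell set" where
  "T a b = {(i, 1) | i. 1 \<le> i \<and> i \<le> 2 * int a + 1}
         \<union> {(int a + 1, j) | j. 2 \<le> j \<and> j \<le> int b + 1}"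

definition TR :: "nat \<Rightarrow> nat \<Rightarrow> cell set" where
  "TR a b = {(int b + 1, i) | i. 1 \<le> i \<and> i \<le> 2 * int a + 1}
          \<union> {(j, int a + 1) | j. 1 \<le> j \<and> j \<le> int b}"

definition TR2 :: "nat \<Rightarrow> nat \<Rightarrow> cell set" where
  "TR2 a b = {(i, int b + 1) | i. 1 \<le> i \<and> i \<le> 2 * int a + 1}
           \<union> {(int a + 1, j) | j. 1 \<le> j \<and> j \<le> int b}"

definition TR3 :: "nat \<Rightarrow> nat \<Rightarrow> cell set" where
  "TR3 a b = {(1, i) | i. 1 \<le> i \<and> i \<le> 2 * int a + 1}
           \<union> {(j, int a + 1) | j. 2 \<le> j \<and> j \<le> int b + 1}"

definition free_copy_T :: "nat \<Rightarrow> nat \<Rightarrow> cell set \<Rightarrow> bool" where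
  "free_copy_T a b Q \<longleftrightarrow>
     (\<exists>c d. Q = shift (T a b) c d \<or> Q = shift (TR a b) c d
          \<or> Q = shift (TR2 a b) c d \<or> Q = shift (TR3 a b) c d)"

definition valid_arrangement :: "nat \<Rightarrow> cell set set \<Rightarrow> bool" where
  "valid_arrangement n S \<longleftrightarrow>
     (\<forall>P\<in>S. P \<subseteq> board n) \<and> (\<forall>P\<in>S. \<forall>Q\<in>S. P \<noteq> Q \<longrightarrow> P \<inter> Q = {})"

definition free_packing_T :: "nat \<Rightarrow> nat \<Rightarrow> nat \<Rightarrow> cell set set \<Rightarrow> bool" where
  "free_packing_T a b n S \<longleftrightarrow>
     (\<forall>P\<in>S. free_copy_T a b P) \<and> valid_arrangement n S \<and>
     (\<forall>Q. free_copy_T a b Q \<and> Q \<notin> S \<longrightarrow> \<not> valid_arrangement n (insert Q S))"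

definition cp_free_T :: "nat \<Rightarrow> nat \<Rightarrow> nat" where
  "cp_free_T a b = (LEAST k. \<exists>S. free_packing_T a b (card (T a b)) S \<and> finite S \<and> card S = k)"

end

theory Submission imports Defs begin

lemma shift_mem: "((x,y) \<in> shift P c d) \<longleftrightarrow> (x - c, y - d) \<in> P"
  unfolding shift_def by force

lemma memT: "((x,y) \<in> shift (T a b) c d) \<longleftrightarrow>
  (y = d+1 \<and> c+1 \<le> x \<and> x \<le> c + 2*int a + 1) \<or> (x = c + int a + 1 \<and> d+2 \<le> y \<and> y \<le> d + int b + 1)"
  unfolding shift_mem T_def by auto

lemma memTR: "((x,y) \<in> shift (TR a b) c d) \<longleftrightarrow>
  (x = c + int b + 1 \<and> d+1 \<le> y \<and> y \<le> d + 2*int a + 1) \<or> (y = d + int a + 1 \<and> c+1 \<le> x \<and> x \<le> c + int b)"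
  unfolding shift_mem TR_def by auto

lemma memTR2: "((x,y) \<in> shift (TR2 a b) c d) \<longleftrightarrow>
  (y = d + int b + 1 \<and> c+1 \<le> x \<and> x \<le> c + 2*int a + 1) \<or> (x = c + int a + 1 \<and> d+1 \<le> y \<and> y \<le> d + int b)"
  unfolding shift_mem TR2_def by auto

lemma memTR3: "((x,y) \<in> shift (TR3 a b) c d) \<longleftrightarrow>
  (x = c + 1 \<and> d+1 \<le> y \<and> y \<le> d + 2*int a + 1) \<or> (y = d + int a + 1 \<and> c+2 \<le> x \<and> x \<le> c + int b + 1)"
  unfolding shift_mem TR3_def by auto

definition rho :: "int \<Rightarrow> cell \<Rightarrow> cell" where
  "rho N p = (N + 1 - snd p, fst p)"

lemma mem_R: "((x,y) \<in> rho N ` A) \<longleftrightarrow> (y, N+1-x) \<in> A"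
proof
  assume "(x,y) \<in> rho N ` A"
  then obtain u v where "(u,v) \<in> A" "(x,y) = rho N (u,v)" by auto
  then show "(y, N+1-x) \<in> A" by (auto simp: rho_def)
next
  assume "(y, N+1-x) \<in> A"
  moreover have "(x,y) = rho N (y, N+1-x)" by (simp add: rho_def)
  ultimately show "(x,y) \<in> rho N ` A" by blast
qed

lemma rT: "rho (2*int a + int b + 1) ` shift (T a b) c d = shift (TR a b) (2*int a - d) c"
  by (rule set_eqI, clarify, simp only: mem_R memT memTR, arith)
lemma rTR: "rho (2*int a + int b + 1) ` shift (TR a b) c d = shift (TR2 a b) (int b - d) c"
  by (rule set_eqI, clarify, simp only: mem_R memTR2 memTR, arith)
lemma rTR2: "rho (2*int a + int b + 1) ` shift (TR2 a b) c d = shift (TR3 a b) (2*int a - d) c"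
  by (rule set_eqI, clarify, simp only: mem_R memTR2 memTR3, arith)
lemma rTR3: "rho (2*int a + int b + 1) ` shift (TR3 a b) c d = shift (T a b) (int b - d) c"
  by (rule set_eqI, clarify, simp only: mem_R memT memTR3, arith)

lemma rho_inj: "inj (rho N)"
  by (rule injI) (auto simp: rho_def prod_eq_iff)

lemma rho4: "rho N ` rho N ` rho N ` rho N ` A = A"
  by (rule set_eqI, clarify, simp only: mem_R, simp)

lemma mem_board: "((x,y) \<in> board n) \<longleftrightarrow> 1 \<le> x \<and> x \<le> int n \<and> 1 \<le> y \<and> y \<le> int n"
  by (simp add: board_def)

lemma R_board: "A \<subseteq> board n \<Longrightarrow> rho (int n) ` A \<subseteq> board n"
  by (auto simp: rho_def board_def)

definition RR :: "nat \<Rightarrow> nat \<Rightarrow> cell set \<Rightarrow> cell set" where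
  "RR a b A = rho (2*int a + int b + 1) ` A"

lemma mem_RR: "((x,y) \<in> RR a b A) \<longleftrightarrow> (y, 2*int a + int b + 2 - x) \<in> A"
  unfolding RR_def mem_R by (simp add: algebra_simps)

lemma RR4: "RR a b (RR a b (RR a b (RR a b A))) = A"
  unfolding RR_def by (rule rho4)

lemma RR_Int: "RR a b (A \<inter> B) = RR a b A \<inter> RR a b B"
  unfolding RR_def by (rule image_Int[OF rho_inj])

lemma RR_Un: "RR a b (A \<union> B) = RR a b A \<union> RR a b B"
  unfolding RR_def by (rule image_Un)

lemma RR_empty: "RR a b A = {} \<longleftrightarrow> A = {}"
  unfolding RR_def by simp

lemma RR_board: "A \<subseteq> board (2*a+b+1) \<Longrightarrow> RR a b A \<subseteq> board (2*a+b+1)"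
proof -
  assume h: "A \<subseteq> board (2*a+b+1)"
  have e: "int (2*a+b+1) = 2*int a + int b + 1" by simp
  show ?thesis unfolding RR_def using R_board[OF h] unfolding e .
qed

lemma RR_board_rev: "RR a b A \<subseteq> board (2*a+b+1) \<Longrightarrow> A \<subseteq> board (2*a+b+1)"
  by (metis RR4 RR_board)

lemma free_RR: "free_copy_T a b Q \<Longrightarrow> free_copy_T a b (RR a b Q)"
  unfolding free_copy_T_def RR_def
  using rT rTR rTR2 rTR3 by metis

lemma decomp: "free_copy_T a b Q \<Longrightarrow> \<exists>c d. Q = shift (T a b) c d \<or> Q = RR a b (shift (T a b) c d)
   \<or> Q = RR a b (RR a b (shift (T a b) c d)) \<or> Q = RR a b (RR a b (RR a b (shift (T a b) c d)))"
proof -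
  assume "free_copy_T a b Q"
  then obtain c d where h: "Q = shift (T a b) c d \<or> Q = shift (TR a b) c d
          \<or> Q = shift (TR2 a b) c d \<or> Q = shift (TR3 a b) c d"
    unfolding free_copy_T_def by blast
  have e1: "shift (TR a b) c d = RR a b (shift (T a b) d (2*int a - c))"
    unfolding RR_def rT by simp
  have e2: "shift (TR2 a b) c d = RR a b (RR a b (shift (T a b) (int b - c) (2*int a - d)))"
    unfolding RR_def rT rTR by simp
  have e3: "shift (TR3 a b) c d = RR a b (RR a b (RR a b (shift (T a b) (int b - d) c)))"
    unfolding RR_def rT rTR rTR2 by simp
  show ?thesis using h e1 e2 e3 by blast
qed

lemma rot_induct:
  assumes "free_copy_T a b Q"
    and "\<And>c d. \<Phi> (shift (T a b) c d)"
    and "\<And>P. \<Phi> P \<Longrightarrow> \<Phi> (RR a b P)"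
  shows "\<Phi> Q"
  using decomp[OF assms(1)] assms(2,3) by metis

lemma sub_board_iff: "A \<subseteq> board n \<longleftrightarrow> (\<forall>x y. (x,y) \<in> A \<longrightarrow> 1 \<le> x \<and> x \<le> int n \<and> 1 \<le> y \<and> y \<le> int n)"
  by (auto simp: board_def)

lemma disj_iff: "A \<inter> B = {} \<longleftrightarrow> (\<forall>x y. (x,y) \<in> A \<longrightarrow> (x,y) \<notin> B)"
  by auto

lemma T_bounds:
  assumes "0 < b" "shift (T a b) c d \<subseteq> board (2*a+b+1)"
  shows "0 \<le> c \<and> c \<le> int b \<and> 0 \<le> d \<and> d \<le> 2 * int a"
proof -
  have "(c+1, d+1) \<in> shift (T a b) c d" "(c + 2*int a + 1, d+1) \<in> shift (T a b) c d"
       "(c + int a + 1, d + int b + 1) \<in> shift (T a b) c d"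
    using assms(1) by (simp_all only: memT, simp_all)
  with assms show ?thesis by (auto simp: board_def)
qed

lemma lower_T:
  assumes a: "0 < a" and b: "0 < b" and sb: "shift (T a b) c d \<subseteq> board (2*a+b+1)"
  shows "\<exists>Q. free_copy_T a b Q \<and> Q \<subseteq> board (2*a+b+1) \<and> shift (T a b) c d \<inter> Q = {}"
proof -
  have bd: "0 \<le> c \<and> c \<le> int b \<and> 0 \<le> d \<and> d \<le> 2 * int a" using T_bounds[OF b sb] .
  have bb: "1 \<le> int b" using b by simp
  consider "d < 2 * int a \<and> c = 0" | "d < 2 * int a \<and> c \<noteq> 0" | "d = 2 * int a \<and> c \<noteq> 0"
     | "d = 2 * int a \<and> c = 0" using bd by linarith
  then show ?thesis
  proof cases
    case 1
    let ?Q = "shift (TR2 a b) (int b) (2 * int a)"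
    have "free_copy_T a b ?Q" unfolding free_copy_T_def by blast
    moreover have "?Q \<subseteq> board (2*a+b+1)"
      unfolding sub_board_iff memTR2 using bd bb 1 by auto
    moreover have "shift (T a b) c d \<inter> ?Q = {}"
      unfolding disj_iff memTR2 memT using bd bb 1 by auto
    ultimately show ?thesis by blast
  next
    case 2
    let ?Q = "shift (TR2 a b) 0 (2 * int a)"
    have "free_copy_T a b ?Q" unfolding free_copy_T_def by blast
    moreover have "?Q \<subseteq> board (2*a+b+1)"
      unfolding sub_board_iff memTR2 using bd bb 2 by auto
    moreover have "shift (T a b) c d \<inter> ?Q = {}"
      unfolding disj_iff memTR2 memT using bd bb 2 by auto
    ultimately show ?thesis by blast
  next
    case 3
    let ?Q = "shift (TR3 a b) 0 0"
    have "free_copy_T a b ?Q" unfolding free_copy_T_def by blast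
    moreover have "?Q \<subseteq> board (2*a+b+1)"
      unfolding sub_board_iff memTR3 using bd bb 3 a by auto
    moreover have "shift (T a b) c d \<inter> ?Q = {}"
      unfolding disj_iff memTR3 memT using bd bb 3 a by auto
    ultimately show ?thesis by blast
  next
    case 4
    let ?Q = "shift (TR a b) (2 * int a) 0"
    have "free_copy_T a b ?Q" unfolding free_copy_T_def by blast
    moreover have "?Q \<subseteq> board (2*a+b+1)"
      unfolding sub_board_iff memTR using bd bb 4 a by auto
    moreover have "shift (T a b) c d \<inter> ?Q = {}"
      unfolding disj_iff memTR memT using bd bb 4 a by auto
    ultimately show ?thesis by blast
  qed
qed

lemma lower_all:
  assumes a: "0 < a" and b: "0 < b" and f: "free_copy_T a b P"
  shows "P \<subseteq> board (2*a+b+1) \<longrightarrow>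
     (\<exists>Q. free_copy_T a b Q \<and> Q \<subseteq> board (2*a+b+1) \<and> P \<inter> Q = {})"
proof (rule rot_induct[OF f])
  fix c d show "shift (T a b) c d \<subseteq> board (2*a+b+1) \<longrightarrow>
     (\<exists>Q. free_copy_T a b Q \<and> Q \<subseteq> board (2*a+b+1) \<and> shift (T a b) c d \<inter> Q = {})"
    using lower_T[OF a b] by blast
next
  fix P assume IH: "P \<subseteq> board (2*a+b+1) \<longrightarrow>
     (\<exists>Q. free_copy_T a b Q \<and> Q \<subseteq> board (2*a+b+1) \<and> P \<inter> Q = {})"
  show "RR a b P \<subseteq> board (2*a+b+1) \<longrightarrow>
     (\<exists>Q. free_copy_T a b Q \<and> Q \<subseteq> board (2*a+b+1) \<and> RR a b P \<inter> Q = {})"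
  proof
    assume "RR a b P \<subseteq> board (2*a+b+1)"
    then have "P \<subseteq> board (2*a+b+1)" by (rule RR_board_rev)
    with IH obtain Q where "free_copy_T a b Q" "Q \<subseteq> board (2*a+b+1)" "P \<inter> Q = {}" by blast
    then show "\<exists>Q. free_copy_T a b Q \<and> Q \<subseteq> board (2*a+b+1) \<and> RR a b P \<inter> Q = {}"
      by (metis RR_Int RR_board RR_empty free_RR)
  qed
qed

definition "PP0 a b m = shift (T a b) 0 (m-1)"
definition "PP1 a b m = shift (TR a b) (2*int a-m+1) 0"
definition "PP2 a b m = shift (TR2 a b) (int b) (2*int a-m+1)"
definition "PP3 a b m = shift (TR3 a b) (m-1) (int b)"

lemma RP0: "RR a b (PP0 a b m) = PP1 a b m"
  unfolding PP0_def PP1_def by (rule set_eqI, clarify, simp only: mem_RR memT memTR, arith)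
lemma RP1: "RR a b (PP1 a b m) = PP2 a b m"
  unfolding PP2_def PP1_def by (rule set_eqI, clarify, simp only: mem_RR memTR2 memTR, arith)
lemma RP2: "RR a b (PP2 a b m) = PP3 a b m"
  unfolding PP2_def PP3_def by (rule set_eqI, clarify, simp only: mem_RR memTR2 memTR3, arith)
lemma RP3: "RR a b (PP3 a b m) = PP0 a b m"
  unfolding PP0_def PP3_def by (rule set_eqI, clarify, simp only: mem_RR memT memTR3, arith)

lemma cover:
  assumes m: "1 \<le> m" "m \<le> int a" "m \<le> int b" "m = int a \<or> m = int b"
    and bd: "0 \<le> c" "c \<le> int b" "0 \<le> d" "d \<le> 2 * int a"
  shows "\<exists>x y. (x,y) \<in> shift (T a b) c d \<and>
     ((x,y) \<in> PP0 a b m \<or> (x,y) \<in> PP1 a b m \<or> (x,y) \<in> PP2 a b m \<or> (x,y) \<in> PP3 a b m)"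
proof -
  have "c \<ge> int b+1-m \<or> (c \<le> m-1 \<and> d \<ge> int b) \<or> (d = m-1 \<and> c \<le> 2*int a) \<or> (d \<le> m-2 \<and> c \<le> int a)
     \<or> (int a-m+1 \<le> c \<and> c \<le> int a-m+int b \<and> int a-int b \<le> d \<and> d \<le> int a-1)
     \<or> (m-int a \<le> c \<and> c \<le> m+int b-int a-1 \<and> int a \<le> d \<and> d \<le> int a+int b-1)"
    using m bd by arith
  then show ?thesis
  proof (elim disjE)
    assume h: "c \<ge> int b+1-m"
    show ?thesis
      by (rule exI[of _ "2*int a + int b + 2 - m"], rule exI[of _ "d+1"],
          simp only: memT PP1_def memTR, use h m bd in arith)
  next
    assume h: "c \<le> m-1 \<and> d \<ge> int b"
    show ?thesis
      by (rule exI[of _ "m"], rule exI[of _ "d+1"],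
          simp only: memT PP3_def memTR3, use h m bd in arith)
  next
    assume h: "d = m-1 \<and> c \<le> 2*int a"
    show ?thesis
      by (rule exI[of _ "c+1"], rule exI[of _ "m"],
          simp only: memT PP0_def, use h m bd in arith)
  next
    assume h: "d \<le> m-2 \<and> c \<le> int a"
    show ?thesis
      by (rule exI[of _ "c+int a+1"], rule exI[of _ "m"],
          simp only: memT PP0_def, use h m bd in arith)
  next
    assume h: "int a-m+1 \<le> c \<and> c \<le> int a-m+int b \<and> int a-int b \<le> d \<and> d \<le> int a-1"
    show ?thesis
      by (rule exI[of _ "c+int a+1"], rule exI[of _ "int a+1"],
          simp only: memT PP1_def memTR, use h m bd in arith)
  next
    assume h: "m-int a \<le> c \<and> c \<le> m+int b-int a-1 \<and> int a \<le> d \<and> d \<le> int a+int b-1"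
    show ?thesis
      by (rule exI[of _ "c+int a+1"], rule exI[of _ "int a+int b+1"],
          simp only: memT PP3_def memTR3, use h m bd in arith)
  qed
qed

definition "UU a b m = PP0 a b m \<union> PP1 a b m \<union> PP2 a b m \<union> PP3 a b m"

lemma RR_UU: "RR a b (UU a b m) = UU a b m"
  unfolding UU_def RR_Un RP0 RP1 RP2 RP3 by blast

lemma upper_all:
  assumes m: "1 \<le> m" "m \<le> int a" "m \<le> int b" "m = int a \<or> m = int b"
    and b: "0 < b" and f: "free_copy_T a b Q"
  shows "Q \<subseteq> board (2*a+b+1) \<longrightarrow> Q \<inter> UU a b m \<noteq> {}"
proof (rule rot_induct[OF f])
  fix c d show "shift (T a b) c d \<subseteq> board (2*a+b+1) \<longrightarrow> shift (T a b) c d \<inter> UU a b m \<noteq> {}"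
  proof
    assume "shift (T a b) c d \<subseteq> board (2*a+b+1)"
    from T_bounds[OF b this] have "0 \<le> c" "c \<le> int b" "0 \<le> d" "d \<le> 2 * int a" by auto
    from cover[OF m this] show "shift (T a b) c d \<inter> UU a b m \<noteq> {}"
      unfolding UU_def by blast
  qed
next
  fix P assume IH: "P \<subseteq> board (2*a+b+1) \<longrightarrow> P \<inter> UU a b m \<noteq> {}"
  show "RR a b P \<subseteq> board (2*a+b+1) \<longrightarrow> RR a b P \<inter> UU a b m \<noteq> {}"
  proof
    assume "RR a b P \<subseteq> board (2*a+b+1)"
    then have "P \<subseteq> board (2*a+b+1)" by (rule RR_board_rev)
    with IH have "P \<inter> UU a b m \<noteq> {}" by blast
    then have "RR a b (P \<inter> UU a b m) \<noteq> {}" by (simp add: RR_empty)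
    then show "RR a b P \<inter> UU a b m \<noteq> {}" by (simp add: RR_Int RR_UU)
  qed
qed

lemma free_nonempty: "free_copy_T a b Q \<Longrightarrow> Q \<noteq> {}"
proof -
  assume "free_copy_T a b Q"
  then obtain c d where h: "Q = shift (T a b) c d \<or> Q = shift (TR a b) c d
          \<or> Q = shift (TR2 a b) c d \<or> Q = shift (TR3 a b) c d"
    unfolding free_copy_T_def by blast
  have "(c+1,d+1) \<in> shift (T a b) c d" by (simp only: memT, simp)
  moreover have "(c+int b+1,d+1) \<in> shift (TR a b) c d" by (simp only: memTR, simp)
  moreover have "(c+1,d+int b+1) \<in> shift (TR2 a b) c d" by (simp only: memTR2, simp)
  moreover have "(c+1,d+1) \<in> shift (TR3 a b) c d" by (simp only: memTR3, simp)
  ultimately show ?thesis using h by blast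
qed

lemma card_T: "card (T a b) = 2*a+b+1"
proof -
  have e: "T a b = (\<lambda>i. (i, 1::int)) ` {1..2*int a+1} \<union> (\<lambda>j. (int a + 1, j)) ` {2..int b+1}"
    unfolding T_def by auto
  have d: "(\<lambda>i. (i, 1::int)) ` {1..2*int a+1} \<inter> (\<lambda>j. (int a + 1, j)) ` {2..int b+1} = {}" by auto
  have c1: "card ((\<lambda>i. (i, 1::int)) ` {1..2*int a+1}) = 2*a+1"
    by (subst card_image) (auto simp: inj_on_def)
  have c2: "card ((\<lambda>j. (int a + 1, j)) ` {2..int b+1}) = b"
    by (subst card_image) (auto simp: inj_on_def)
  show ?thesis unfolding e by (subst card_Un_disjoint) (use d c1 c2 in auto)
qed

theorem theorem9:
  fixes a b :: nat
  assumes "0 < a" and "0 < b"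
  shows "card (T a b) = 2 * a + b + 1 \<and> 2 \<le> cp_free_T a b \<and> cp_free_T a b \<le> 4"
proof -
  note a = assms(1) and b = assms(2)
  have cT: "card (T a b) = 2*a+b+1" by (rule card_T)
  define m where "m = int (min a b)"
  have m: "1 \<le> m" "m \<le> int a" "m \<le> int b" "m = int a \<or> m = int b"
    unfolding m_def using a b by auto
  define S0 where "S0 = {PP0 a b m, PP1 a b m, PP2 a b m, PP3 a b m}"
  have fr0: "free_copy_T a b (PP0 a b m)" unfolding PP0_def free_copy_T_def by blast
  have fr1: "free_copy_T a b (PP1 a b m)" unfolding PP1_def free_copy_T_def by blast
  have fr2: "free_copy_T a b (PP2 a b m)" unfolding PP2_def free_copy_T_def by blast
  have fr3: "free_copy_T a b (PP3 a b m)" unfolding PP3_def free_copy_T_def by blast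
  have bo0: "PP0 a b m \<subseteq> board (2*a+b+1)"
    unfolding PP0_def sub_board_iff memT using m by auto
  have bo1: "PP1 a b m \<subseteq> board (2*a+b+1)" using RR_board[OF bo0] RP0 by simp
  have bo2: "PP2 a b m \<subseteq> board (2*a+b+1)" using RR_board[OF bo1] RP1 by simp
  have bo3: "PP3 a b m \<subseteq> board (2*a+b+1)" using RR_board[OF bo2] RP2 by simp
  have d01: "PP0 a b m \<inter> PP1 a b m = {}"
    unfolding PP0_def PP1_def disj_iff memT memTR using m by auto
  have d02: "PP0 a b m \<inter> PP2 a b m = {}"
    unfolding PP0_def PP2_def disj_iff memT memTR2 using m by auto
  have d03: "PP0 a b m \<inter> PP3 a b m = {}"
    unfolding PP0_def PP3_def disj_iff memT memTR3 using m by auto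
  have d12: "PP1 a b m \<inter> PP2 a b m = {}"
    unfolding PP1_def PP2_def disj_iff memTR memTR2 using m by auto
  have d13: "PP1 a b m \<inter> PP3 a b m = {}"
    unfolding PP1_def PP3_def disj_iff memTR memTR3 using m by auto
  have d23: "PP2 a b m \<inter> PP3 a b m = {}"
    unfolding PP2_def PP3_def disj_iff memTR2 memTR3 using m by auto
  have ne: "PP0 a b m \<noteq> {}" "PP1 a b m \<noteq> {}" "PP2 a b m \<noteq> {}" "PP3 a b m \<noteq> {}"
    using free_nonempty fr0 fr1 fr2 fr3 by auto
  have dist: "PP0 a b m \<noteq> PP1 a b m" "PP0 a b m \<noteq> PP2 a b m" "PP0 a b m \<noteq> PP3 a b m"
     "PP1 a b m \<noteq> PP2 a b m" "PP1 a b m \<noteq> PP3 a b m" "PP2 a b m \<noteq> PP3 a b m"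
    using ne d01 d02 d03 d12 d13 d23 by auto
  have cS0: "card S0 = 4" unfolding S0_def using dist by simp
  have vS0: "valid_arrangement (2*a+b+1) S0"
    unfolding valid_arrangement_def S0_def
    using bo0 bo1 bo2 bo3 d01 d02 d03 d12 d13 d23 by blast
  have pS0: "free_packing_T a b (card (T a b)) S0"
    unfolding free_packing_T_def cT
  proof (intro conjI allI impI)
    show "\<forall>P\<in>S0. free_copy_T a b P" unfolding S0_def using fr0 fr1 fr2 fr3 by blast
    show "valid_arrangement (2*a+b+1) S0" by (rule vS0)
    fix Q assume h: "free_copy_T a b Q \<and> Q \<notin> S0"
    show "\<not> valid_arrangement (2*a+b+1) (insert Q S0)"
    proof
      assume v: "valid_arrangement (2*a+b+1) (insert Q S0)"
      then have qb: "Q \<subseteq> board (2*a+b+1)" unfolding valid_arrangement_def by blast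
      have "Q \<inter> UU a b m = {}"
        using v h unfolding valid_arrangement_def UU_def S0_def by blast
      with upper_all[OF m b] h qb show False by blast
    qed
  qed
  define K where "K = {k. \<exists>S. free_packing_T a b (card (T a b)) S \<and> finite S \<and> card S = k}"
  have cpK: "cp_free_T a b = (LEAST k. k \<in> K)" unfolding cp_free_T_def K_def by simp
  have "4 \<in> K" unfolding K_def using pS0 cS0 S0_def by auto
  then have up: "cp_free_T a b \<le> 4" unfolding cpK by (rule Least_le)
  from \<open>4 \<in> K\<close> have "(LEAST k. k \<in> K) \<in> K" by (rule LeastI)
  then obtain S where S: "free_packing_T a b (2*a+b+1) S" "finite S" "card S = cp_free_T a b"
    unfolding K_def cpK cT by auto
  have lo: "2 \<le> cp_free_T a b"
  proof (rule ccontr)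
    assume "\<not> 2 \<le> cp_free_T a b"
    then have "card S = 0 \<or> card S = 1" using S(3) by linarith
    then show False
    proof
      assume "card S = 0"
      then have Se: "S = {}" using S(2) by simp
      let ?Q = "shift (T a b) 0 0"
      have fq: "free_copy_T a b ?Q" unfolding free_copy_T_def by blast
      have "?Q \<subseteq> board (2*a+b+1)" unfolding sub_board_iff memT by auto
      then have "valid_arrangement (2*a+b+1) (insert ?Q S)"
        unfolding Se valid_arrangement_def by auto
      with S(1) fq show False unfolding free_packing_T_def Se by blast
    next
      assume "card S = 1"
      then obtain P where Se: "S = {P}" by (auto simp: card_Suc_eq)
      have fP: "free_copy_T a b P" and bP: "P \<subseteq> board (2*a+b+1)"
        using S(1) unfolding free_packing_T_def valid_arrangement_def Se by auto
      obtain Q where Q: "free_copy_T a b Q" "Q \<subseteq> board (2*a+b+1)" "P \<inter> Q = {}"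
        using lower_all[OF a b fP] bP by blast
      have "Q \<noteq> {}" by (rule free_nonempty[OF Q(1)])
      then have "Q \<notin> S" using Q(3) Se by auto
      moreover have "valid_arrangement (2*a+b+1) (insert Q S)"
        unfolding Se valid_arrangement_def using Q bP by auto
      ultimately show False using S(1) Q(1) unfolding free_packing_T_def by blast
    qed
  qed
  show ?thesis using cT lo up by simp
qed

end
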